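(* Let $X$ be a real Banach space with the almost Daugavet property. Then every convex combination of $w^*$-slices in $B_{X^*}$ has diameter $2$.
   Context: For a subspace $Y\subseteq X^*$, $X$ has the Daugavet property with respect to $Y$ if $\|I+T\|=1+\|T\|$ for every rank-one operator $T=x\otimes y^*:X\to X$ (i.e. $T(z)=y^*(z)x$) with $x\in X$ and $y^*\in Y$. A subspace $Y\subseteq X^*$ is norming if $\|x\|=\sup\{|y^*(x)|: y^*\in Y,\|y^*\|\le1\}$ for all $x\in X$. $X$ has the almost Daugavet property if it has the Daugavet property with respect to some norming subspace of $X^*$. A $w^*$-slice of $B_{X^*}$ is $S(B_{X^*},x,\alpha)=\{f\in B_{X^*}:f(x)>1-\alpha\}$ with $x\in S_X$, $0<\alpha<1$; a convex combination of $w^*$-slices is a Minkowski sum $\sum_{i=1}^n\lambda_iS_i$ of $w^*$-slices $S_i$ with $\lambda_i>0$, $\sum_i\lambda_i=1$. *)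

theory Defs
  imports "HOL-Analysis.Analysis"
begin


definition daugavet_wrt :: "('a::real_normed_vector \<Rightarrow>\<^sub>L real) set \<Rightarrow> bool" where
  "daugavet_wrt Y \<longleftrightarrow>
     (\<forall>x::'a. \<forall>y\<in>Y.
        onorm (\<lambda>z. z + blinfun_apply y z *\<^sub>R x) = 1 + onorm (\<lambda>z. blinfun_apply y z *\<^sub>R x))"

definition norming :: "('a::real_normed_vector \<Rightarrow>\<^sub>L real) set \<Rightarrow> bool" where
  "norming Y \<longleftrightarrow>
     (\<forall>x::'a. norm x = (SUP y\<in>{y\<in>Y. norm y \<le> 1}. \<bar>blinfun_apply y x\<bar>))"

definition almost_daugavet :: "'a::real_normed_vector itself \<Rightarrow> bool" where
  "almost_daugavet TYPE('a) \<longleftrightarrow>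
     (\<exists>Y::('a \<Rightarrow>\<^sub>L real) set. subspace Y \<and> norming Y \<and> daugavet_wrt Y)"

definition wstar_slice :: "'a::real_normed_vector \<Rightarrow> real \<Rightarrow> ('a \<Rightarrow>\<^sub>L real) set" where
  "wstar_slice x \<alpha> = {f. norm f \<le> 1 \<and> blinfun_apply f x > 1 - \<alpha>}"

end

theory Submission
  imports Defs
begin

lemma norming_get:
  fixes Y :: "('a::real_normed_vector \<Rightarrow>\<^sub>L real) set"
  assumes "norming Y" "subspace Y" "c < norm u"
  shows "\<exists>y\<in>Y. norm y \<le> 1 \<and> blinfun_apply y u > c"
proof -
  let ?A = "{y\<in>Y. norm y \<le> 1}"
  have ne: "?A \<noteq> {}" using assms(2) by (auto intro!: exI[of _ 0] simp: subspace_0)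
  have bdd: "bdd_above ((\<lambda>y. \<bar>blinfun_apply y u\<bar>) ` ?A)"
  proof (rule bdd_aboveI[of _ "norm u"])
    fix t assume "t \<in> (\<lambda>y. \<bar>blinfun_apply y u\<bar>) ` ?A"
    then obtain y where y: "y \<in> ?A" "t = \<bar>blinfun_apply y u\<bar>" by auto
    have "\<bar>blinfun_apply y u\<bar> \<le> norm y * norm u" using norm_blinfun[of y u] by simp
    also have "\<dots> \<le> norm u" using y by (simp add: mult_left_le_one_le)
    finally show "t \<le> norm u" using y by simp
  qed
  have "c < (SUP y\<in>?A. \<bar>blinfun_apply y u\<bar>)" using assms(1,3) unfolding norming_def by metis
  then obtain y where y: "y \<in> ?A" "c < \<bar>blinfun_apply y u\<bar>"
    using less_cSUP_iff[OF ne bdd] by blast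
  show ?thesis
  proof (cases "blinfun_apply y u \<ge> 0")
    case True then show ?thesis using y by auto
  next
    case False
    have "- y \<in> Y" using y assms(2) by (simp add: subspace_neg)
    then show ?thesis using y False by (intro bexI[of _ "-y"]) (auto simp: blinfun.minus_left)
  qed
qed

lemma daug_get:
  fixes Y :: "('a::real_normed_vector \<Rightarrow>\<^sub>L real) set"
  assumes D: "daugavet_wrt Y" and yY: "y \<in> Y" and ny: "norm y = 1" and nu: "norm u = 1" and e: "e > 0"
  shows "\<exists>z. norm z \<le> 1 \<and> blinfun_apply y z > 1 - e \<and> norm (u + z) > 2 - e"
proof -
  let ?T = "\<lambda>z. z + blinfun_apply y z *\<^sub>R u"
  have bl: "bounded_linear (blinfun_apply y)" by (rule blinfun.bounded_linear_right)
  have "onorm (\<lambda>z. blinfun_apply y z *\<^sub>R u) = 1"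
    using onorm_scaleR_left[OF bl, of u] nu ny by (simp add: norm_blinfun.rep_eq)
  then have oT: "onorm ?T = 2" using D yY unfolding daugavet_wrt_def by (simp add: bounded_linear_ident)
  have "\<exists>z. norm z \<le> 1 \<and> norm (?T z) > 2 - e/2"
  proof (rule ccontr)
    assume H: "\<not> ?thesis"
    have "\<And>z. norm (?T z) \<le> (2 - e/2) * norm z"
    proof -
      fix z :: 'a
      show "norm (?T z) \<le> (2 - e/2) * norm z"
      proof (cases "z = 0")
        case True then show ?thesis by simp
      next
        case False
        let ?w = "(1 / norm z) *\<^sub>R z"
        have "norm ?w \<le> 1" using False by simp
        then have "norm (?T ?w) \<le> 2 - e/2" using H by (meson not_le)
        moreover have "?T ?w = (1 / norm z) *\<^sub>R ?T z"
          by (simp add: blinfun.scaleR_right scaleR_add_right)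
        ultimately have "norm (?T z) / norm z \<le> 2 - e/2" by simp
        then show ?thesis using False by (simp add: divide_le_eq mult.commute)
      qed
    qed
    note hb = this
    have "norm (?T u) \<le> (2 - e/2) * norm u" by (rule hb)
    then have "0 \<le> 2 - e/2" using nu using norm_ge_zero[of "?T u"] by (simp del: norm_ge_zero)
    then have "onorm ?T \<le> 2 - e/2" using hb
      by (intro onorm_bound) auto
    then show False using oT e by simp
  qed
  then obtain z where z: "norm z \<le> 1" "norm (?T z) > 2 - e/2" by blast
  have "norm (?T z) \<le> norm z + \<bar>blinfun_apply y z\<bar>"
    using norm_triangle_ineq[of z "blinfun_apply y z *\<^sub>R u"] nu by simp
  then have ay: "\<bar>blinfun_apply y z\<bar> > 1 - e/2" using z by linarith
  have key: "\<exists>z'. norm z' \<le> 1 \<and> blinfun_apply y z' > 1 - e/2 \<and> norm (?T z') > 2 - e/2"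
  proof (cases "blinfun_apply y z \<ge> 0")
    case True then show ?thesis using z ay by auto
  next
    case False
    have "?T (-z) = - ?T z" by (simp add: blinfun.minus_right)
    then have "norm (?T (-z)) = norm (?T z)" by (metis norm_minus_cancel)
    then show ?thesis using z ay False by (intro exI[of _ "-z"]) (auto simp: blinfun.minus_right)
  qed
  then obtain w where w: "norm w \<le> 1" "blinfun_apply y w > 1 - e/2" "norm (?T w) > 2 - e/2" by blast
  have yw: "blinfun_apply y w \<le> 1"
  proof -
    have "\<bar>blinfun_apply y w\<bar> \<le> norm y * norm w" using norm_blinfun[of y w] by simp
    also have "\<dots> \<le> 1" using ny w(1) by simp
    finally show ?thesis by simp
  qed
  have "u + w = ?T w + (1 - blinfun_apply y w) *\<^sub>R u" by (simp add: algebra_simps)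
  then have "norm (?T w) \<le> norm (u + w) + norm ((1 - blinfun_apply y w) *\<^sub>R u)"
    by (metis add_diff_cancel_right' norm_triangle_ineq4 add.commute)
  also have "norm ((1 - blinfun_apply y w) *\<^sub>R u) = 1 - blinfun_apply y w" using nu yw by simp
  finally have "norm (u + w) > 2 - e" using w by linarith
  then show ?thesis using w e by (intro exI[of _ w]) auto
qed

lemma le1:
  assumes "norm (f::'a::real_normed_vector \<Rightarrow>\<^sub>L real) \<le> 1" "norm w \<le> 1"
  shows "blinfun_apply f w \<le> 1" "- blinfun_apply f w \<le> 1"
proof -
  have "\<bar>blinfun_apply f w\<bar> \<le> norm f * norm w" using norm_blinfun[of f w] by simp
  also have "\<dots> \<le> 1" using assms by (simp add: mult_le_one)
  finally show "blinfun_apply f w \<le> 1" "- blinfun_apply f w \<le> 1" by auto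
qed

lemma iter:
  fixes Y :: "('a::real_normed_vector \<Rightarrow>\<^sub>L real) set" and u :: "nat \<Rightarrow> 'a"
  assumes D: "daugavet_wrt Y" and N: "norming Y" and S: "subspace Y"
  shows "(\<forall>j<m. norm (u j) = 1) \<Longrightarrow> e > 0 \<Longrightarrow> \<exists>ys z. (\<forall>j<m. ys j \<in> Y \<and> norm (ys j) \<le> 1 \<and> blinfun_apply (ys j) (u j) > 1 - e)
     \<and> norm z \<le> 1 \<and> (\<Sum>j<m. blinfun_apply (ys j) z) > real m - e"
proof (induction m arbitrary: e)
  case 0
  then show ?case by (intro exI[of _ "\<lambda>_. 0"] exI[of _ 0]) auto
next
  case (Suc m)
  have um: "norm (u m) = 1" using Suc.prems by auto
  show ?case
  proof (cases "m = 0")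
    case True
    obtain y where y: "y \<in> Y" "norm y \<le> 1" "blinfun_apply y (u m) > 1 - e"
      using norming_get[OF N S, of "1 - e" "u m"] um Suc.prems by auto
    show ?thesis using y True um by (intro exI[of _ "\<lambda>_. y"] exI[of _ "u m"]) auto
  next
    case False
    define e' where "e' = min (e/4) (1/4)"
    have e'p: "e' > 0" "e' \<le> e/4" "e' \<le> 1/4" using Suc.prems by (auto simp: e'_def)
    obtain ys z0 where ys: "\<forall>j<m. ys j \<in> Y \<and> norm (ys j) \<le> 1 \<and> blinfun_apply (ys j) (u j) > 1 - e'"
      and z0: "norm z0 \<le> 1" "(\<Sum>j<m. blinfun_apply (ys j) z0) > real m - e'"
      using Suc.IH[of e'] Suc.prems e'p by auto
    define F where "F = (\<Sum>j<m. ys j)"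
    have FY: "F \<in> Y" unfolding F_def using ys S by (intro subspace_sum) auto
    have Fap: "\<And>w. blinfun_apply F w = (\<Sum>j<m. blinfun_apply (ys j) w)"
      unfolding F_def by (simp add: blinfun.sum_left)
    have "norm F \<le> (\<Sum>j<m. norm (ys j))" unfolding F_def by (rule norm_sum)
    also have "\<dots> \<le> (\<Sum>j<m. 1)" using ys by (intro sum_mono) auto
    finally have nFu: "norm F \<le> real m" by simp
    have "\<bar>blinfun_apply F z0\<bar> \<le> norm F * norm z0" using norm_blinfun[of F z0] by simp
    also have "\<dots> \<le> norm F" using z0 by (simp add: mult_right_le_one_le)
    finally have nFl: "norm F > real m - e'" using z0 Fap by auto
    have mpos: "real m \<ge> 1" using False by simp
    have nFp: "norm F > 0" using nFl mpos e'p by linarith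
    define G where "G = (1 / norm F) *\<^sub>R F"
    have GY: "G \<in> Y" unfolding G_def using FY S by (simp add: subspace_scale)
    have nG: "norm G = 1" unfolding G_def using nFp by simp
    define \<delta> where "\<delta> = e' / real m"
    have dp: "\<delta> > 0" "\<delta> \<le> e'" "real m * \<delta> = e'" using e'p mpos
      by (auto simp: \<delta>_def divide_le_eq)
    obtain z where z: "norm z \<le> 1" "blinfun_apply G z > 1 - \<delta>" "norm (u m + z) > 2 - \<delta>"
      using daug_get[OF D GY nG um dp(1)] by auto
    have FzG: "blinfun_apply F z = norm F * blinfun_apply G z"
      unfolding G_def using nFp by (simp add: blinfun.scaleR_left)
    have "norm F * blinfun_apply G z \<ge> norm F * (1 - \<delta>)"
      using z(2) nFp by (intro mult_left_mono) auto
    moreover have "norm F * \<delta> \<le> real m * \<delta>" using nFu dp by (intro mult_right_mono) auto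
    moreover have "norm F * (1 - \<delta>) = norm F - norm F * \<delta>" by (simp add: algebra_simps)
    ultimately have Fz: "blinfun_apply F z > real m - 2 * e'"
      using FzG nFl dp(3) by linarith
    obtain y where y: "y \<in> Y" "norm y \<le> 1" "blinfun_apply y (u m + z) > 2 - \<delta>"
      using norming_get[OF N S z(3)] by auto
    have yum: "blinfun_apply y (u m) \<le> 1" using le1[OF y(2)] um by simp
    have yz: "blinfun_apply y z \<le> 1" using le1[OF y(2) z(1)] by simp
    have yadd: "blinfun_apply y (u m + z) = blinfun_apply y (u m) + blinfun_apply y z"
      by (simp add: blinfun.add_right)
    have y1: "blinfun_apply y (u m) > 1 - \<delta>" "blinfun_apply y z > 1 - \<delta>"
      using y(3) yum yz yadd by linarith+
    define ys' where "ys' = ys(m := y)"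
    have sm: "(\<Sum>j<m. blinfun_apply (ys' j) z) = blinfun_apply F z"
      unfolding Fap ys'_def by (intro sum.cong) auto
    have "(\<Sum>j<Suc m. blinfun_apply (ys' j) z) = blinfun_apply F z + blinfun_apply y z"
      using sm by (simp add: ys'_def)
    then have fin: "(\<Sum>j<Suc m. blinfun_apply (ys' j) z) > real (Suc m) - e"
      using Fz y1 dp e'p by simp
    have "\<forall>j<Suc m. ys' j \<in> Y \<and> norm (ys' j) \<le> 1 \<and> blinfun_apply (ys' j) (u j) > 1 - e"
    proof (intro allI impI)
      fix j assume "j < Suc m"
      show "ys' j \<in> Y \<and> norm (ys' j) \<le> 1 \<and> blinfun_apply (ys' j) (u j) > 1 - e"
      proof (cases "j = m")
        case True
        have "1 - e \<le> 1 - \<delta>" using dp(2) e'p(2) Suc.prems by linarith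
        then show ?thesis using True y y1(1) by (simp add: ys'_def)
      next
        case False
        then have jm: "j < m" using \<open>j < Suc m\<close> by simp
        then have a: "ys j \<in> Y" "norm (ys j) \<le> 1" "blinfun_apply (ys j) (u j) > 1 - e'" using ys by auto
        have "1 - e \<le> 1 - e'" using e'p(2) Suc.prems by linarith
        then show ?thesis using False a by (simp add: ys'_def)
      qed
    qed
    then show ?thesis using fin z(1) by blast
  qed
qed

lemma each_big:
  fixes f :: "nat \<Rightarrow> real"
  assumes "finite A" "j \<in> A" "\<forall>k\<in>A. f k \<le> 1" "sum f A > real (card A) - e"
  shows "f j > 1 - e"
proof -
  have "sum f A = f j + sum f (A - {j})" using assms by (simp add: sum.remove)
  moreover have "sum f (A - {j}) \<le> real (card (A - {j})) * 1"
    using assms by (intro sum_bounded_above) auto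
  moreover have "card (A - {j}) = card A - 1" using assms by simp
  moreover have "card A \<ge> 1" using assms by (metis One_nat_def Suc_leI card_gt_0_iff empty_iff)
  ultimately show ?thesis using assms(4) by (simp add: of_nat_diff)
qed

lemma apply_le_norm:
  assumes "norm w \<le> 1"
  shows "blinfun_apply f w \<le> norm (f::'a::real_normed_vector \<Rightarrow>\<^sub>L real)"
proof -
  have "\<bar>blinfun_apply f w\<bar> \<le> norm f * norm w" using norm_blinfun[of f w] by simp
  also have "\<dots> \<le> norm f" using assms by (simp add: mult_right_le_one_le)
  finally show ?thesis by simp
qed

theorem mainTheorem3:
  fixes x :: "nat \<Rightarrow> 'a::banach" and \<alpha> lam :: "nat \<Rightarrow> real" and n :: nat
  assumes "almost_daugavet TYPE('a)"
    and "n \<ge> 1"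
    and "\<forall>i<n. norm (x i) = 1 \<and> 0 < \<alpha> i \<and> \<alpha> i < 1 \<and> 0 < lam i"
    and "(\<Sum>i<n. lam i) = 1"
  shows "diameter {\<Sum>i<n. lam i *\<^sub>R g i | g. \<forall>i<n. g i \<in> wstar_slice (x i) (\<alpha> i)} = 2"
proof -
  obtain Y :: "('a \<Rightarrow>\<^sub>L real) set" where S: "subspace Y" and N: "norming Y" and D: "daugavet_wrt Y"
    using assms(1) unfolding almost_daugavet_def by blast
  define A where "A = {\<Sum>i<n. lam i *\<^sub>R g i | g. \<forall>i<n. g i \<in> wstar_slice (x i) (\<alpha> i)}"
  have nA: "norm s \<le> 1" if "s \<in> A" for s
  proof -
    have "\<exists>g. s = (\<Sum>i<n. lam i *\<^sub>R g i) \<and> (\<forall>i<n. g i \<in> wstar_slice (x i) (\<alpha> i))"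
      using that unfolding A_def by simp
    then obtain g where g: "s = (\<Sum>i<n. lam i *\<^sub>R g i)" "\<forall>i<n. g i \<in> wstar_slice (x i) (\<alpha> i)"
      by blast
    have "norm s \<le> (\<Sum>i<n. norm (lam i *\<^sub>R g i))" unfolding g(1) by (rule norm_sum)
    also have "\<dots> \<le> (\<Sum>i<n. lam i)"
    proof (intro sum_mono)
      fix i assume "i \<in> {..<n}"
      then have "norm (g i) \<le> 1" "lam i > 0" using g(2) assms(3) by (auto simp: wstar_slice_def)
      then show "norm (lam i *\<^sub>R g i) \<le> lam i" by (simp add: mult_left_le_one_le)
    qed
    finally show ?thesis using assms(4) by simp
  qed
  have bA: "bounded A"
    by (rule bounded_subset[OF bounded_cball[of 0 1]]) (auto dest: nA)
  have up: "diameter A \<le> 2"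
  proof (rule diameter_le)
    fix a b assume "a \<in> A" "b \<in> A"
    then have "norm a \<le> 1" "norm b \<le> 1" using nA by auto
    then show "norm (a - b) \<le> 2" using norm_triangle_ineq4[of a b] by linarith
  qed simp
  have low: "diameter A \<ge> 2 - \<epsilon>" if ep: "\<epsilon> > 0" for \<epsilon>
  proof -
    have fin: "finite (\<alpha> ` {..<n})" and ne: "\<alpha> ` {..<n} \<noteq> {}" using assms(2) by (auto simp: lessThan_empty_iff)
    define e where "e = min (\<epsilon>/4) (Min (\<alpha> ` {..<n}))"
    have mp: "Min (\<alpha> ` {..<n}) > 0" using Min_gr_iff[OF fin ne] assms(3) by auto
    have ep': "e > 0" "e \<le> \<epsilon>/4" using ep mp by (auto simp: e_def)
    have ea: "e \<le> \<alpha> i" if "i < n" for i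
      using Min_le[OF fin, of "\<alpha> i"] that unfolding e_def by (meson imageI lessThan_iff min.coboundedI2)
    define u where "u j = (if j < n then x j else - x (j - n))" for j
    have nu: "\<forall>j<n+n. norm (u j) = 1" using assms(3) by (auto simp: u_def)
    obtain ys z where ys: "\<forall>j<n+n. ys j \<in> Y \<and> norm (ys j) \<le> 1 \<and> blinfun_apply (ys j) (u j) > 1 - e"
      and z: "norm z \<le> 1" "(\<Sum>j<n+n. blinfun_apply (ys j) z) > real (n+n) - e"
      using iter[OF D N S nu ep'(1)] by blast
    have big: "blinfun_apply (ys j) z > 1 - e" if "j < n + n" for j
      using each_big[of "{..<n+n}" j "\<lambda>j. blinfun_apply (ys j) z" e] that z ys le1(1)[OF _ z(1)]
      by auto
    define g where "g i = ys i" for i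
    define h where "h i = - ys (n + i)" for i
    have gs: "\<forall>i<n. g i \<in> wstar_slice (x i) (\<alpha> i)"
    proof (intro allI impI)
      fix i assume i: "i < n"
      then have "norm (ys i) \<le> 1" "blinfun_apply (ys i) (x i) > 1 - e" using ys[rule_format, of i] by (auto simp: u_def)
      then show "g i \<in> wstar_slice (x i) (\<alpha> i)" using ea[OF i] by (auto simp: g_def wstar_slice_def)
    qed
    have hs: "\<forall>i<n. h i \<in> wstar_slice (x i) (\<alpha> i)"
    proof (intro allI impI)
      fix i assume i: "i < n"
      then have "norm (ys (n+i)) \<le> 1" "blinfun_apply (ys (n+i)) (- x i) > 1 - e"
        using ys[rule_format, of "n+i"] by (auto simp: u_def)
      then show "h i \<in> wstar_slice (x i) (\<alpha> i)" using ea[OF i]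
        by (auto simp: h_def wstar_slice_def blinfun.minus_left blinfun.minus_right)
    qed
    define P where "P = (\<Sum>i<n. lam i *\<^sub>R g i)"
    define Q where "Q = (\<Sum>i<n. lam i *\<^sub>R h i)"
    have PA: "P \<in> A" using gs unfolding A_def P_def by blast
    have QA: "Q \<in> A" using hs unfolding A_def Q_def by blast
    have "blinfun_apply (P - Q) z = (\<Sum>i<n. lam i * (blinfun_apply (ys i) z + blinfun_apply (ys (n+i)) z))"
      by (simp add: P_def Q_def g_def h_def blinfun.diff_left blinfun.sum_left blinfun.scaleR_left
          blinfun.minus_left blinfun.add_left sum_subtractf[symmetric] algebra_simps)
    also have "\<dots> \<ge> (\<Sum>i<n. lam i * (2 - 2 * e))"
    proof (intro sum_mono mult_left_mono)
      fix i assume "i \<in> {..<n}"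
      then show "2 - 2 * e \<le> blinfun_apply (ys i) z + blinfun_apply (ys (n+i)) z" "0 \<le> lam i"
        using big[of i] big[of "n+i"] assms(3) by auto
    qed
    moreover have "(\<Sum>i<n. lam i * (2 - 2 * e)) = 2 - 2 * e"
      using assms(4) by (simp add: sum_distrib_right[symmetric])
    ultimately have "blinfun_apply (P - Q) z \<ge> 2 - 2 * e" by simp
    moreover have "blinfun_apply (P - Q) z \<le> dist P Q"
      using apply_le_norm[OF z(1), of "P - Q"] by (simp add: dist_norm)
    moreover have "dist P Q \<le> diameter A" by (rule diameter_bounded_bound[OF bA PA QA])
    ultimately show ?thesis using ep' by linarith
  qed
  have "diameter A \<ge> 2"
  proof (rule ccontr)
    assume "\<not> diameter A \<ge> 2"
    then have "0 < (2 - diameter A) / 2" by simp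
    from low[OF this] show False using \<open>0 < (2 - diameter A) / 2\<close> by (simp add: field_simps)
  qed
  then show ?thesis using up unfolding A_def by simp
qed

end
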